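(* Let $c<d$ be real numbers and suppose $\omega$ is nonnegative and nondecreasing on $[c,d)$. Let $\eta>0$ and $r>1$ satisfy $\eta<1-\frac1r$. Let $E\subset[c,d)$ be measurable and set $\rho=\int_E\omega(t)\,dt$. Then for every $t_0\in\mathbb{R}$, $$\rho^{1+r\eta}\,\omega(c)^{r-(1+r\eta)}\le C(\eta,r)\int_E\omega(t)^r\,|t-t_0|^{r\eta}\,dt,$$ and for all $t_1,t_2\in\mathbb{R}$, $$\rho^{1+r\eta}\,|t_2-t_1|^{r\eta}\,\omega(c)^{r-(1+r\eta)}\le C(\eta,r)\int_E\omega(t)^r\,\big(|t-t_1|\cdot|t-t_2|\big)^{r\eta}\,dt,$$ where $C(\eta,r)$ depends only on $\eta$ and $r$. *)

theory Defs
  imports "HOL-Analysis.Analysis"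
begin

text \<open>Real power of an extended nonnegative real, used only with positive exponents:
  infinity to a positive power is infinity.\<close>
definition ennpowr :: "ennreal \<Rightarrow> real \<Rightarrow> ennreal" where
  "ennpowr x p = (if x = \<infinity> then \<infinity> else ennreal (enn2real x powr p))"

end

theory Submission
  imports Defs
begin

lemma bm_leb: "f \<in> borel_measurable borel \<Longrightarrow> f \<in> borel_measurable lebesgue"
  by (rule measurable_completion) simp

lemma bm_ind_leb: "E \<in> sets lebesgue \<Longrightarrow> (\<lambda>x. c * indicator E x :: ennreal) \<in> borel_measurable lebesgue"
  by (intro borel_measurable_times_ennreal borel_measurable_const borel_measurable_indicator)

lemma pointwise_split:
  fixes x w K r :: real
  assumes "x > 0" "w > 0" "K > 0" "r > 1"
  shows "x \<le> x powr r * w / K + K powr (1/(r-1)) * w powr (-1/(r-1))"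
proof (cases "x powr (r-1) * w \<ge> K")
  case True
  have "x * K \<le> x * (x powr (r-1) * w)" using True assms by (intro mult_left_mono) auto
  also have "\<dots> = x powr r * w" using assms by (simp add: powr_diff powr_one)
  finally have "x \<le> x powr r * w / K" using assms by (simp add: field_simps)
  moreover have "0 \<le> K powr (1/(r-1)) * w powr (-1/(r-1))" by simp
  moreover have "0 \<le> x powr r * w / K" using assms by simp
  ultimately show ?thesis by linarith
next
  case False
  hence "x powr (r-1) < K / w" using assms by (simp add: field_simps)
  hence "(x powr (r-1)) powr (1/(r-1)) < (K / w) powr (1/(r-1))"
    using assms by (intro powr_less_mono2) auto
  moreover have "(x powr (r-1)) powr (1/(r-1)) = x" using assms by (simp add: powr_powr)
  moreover have "(K / w) powr (1/(r-1)) = K powr (1/(r-1)) * w powr (-1/(r-1))"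
    using assms by (simp add: powr_divide powr_minus_divide divide_simps)
  ultimately have "x < K powr (1/(r-1)) * w powr (-1/(r-1))" by simp
  moreover have "0 \<le> x powr r * w / K" using assms by simp
  ultimately show ?thesis by linarith
qed

lemma near_integral:
  fixes h q t0 :: real
  assumes "h > 0" "0 < q" "q < 1"
  shows "(\<integral>\<^sup>+t. ennreal (\<bar>t - t0\<bar> powr (-q)) * indicator {t0-h..t0+h} t \<partial>lebesgue)
     = ennreal (2 * (h powr (1-q) / (1-q)))"
proof -
  have a: "((\<lambda>x. x powr (-q)) has_integral (h powr (1-q) / (1-q))) {0..h}"
    using has_integral_powr_from_0[of "-q" h] assms by simp
  have a': "((\<lambda>x. \<bar>x\<bar> powr (-q)) has_integral (h powr (1-q) / (1-q))) {0..h}"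
    by (rule has_integral_eq[OF _ a]) auto
  have b: "((\<lambda>x. \<bar>x\<bar> powr (-q)) has_integral (h powr (1-q) / (1-q))) {-h..0}"
    using has_integral_reflect_lemma_real[OF a'] by simp
  have c: "((\<lambda>x. \<bar>x\<bar> powr (-q)) has_integral (2 * (h powr (1-q) / (1-q)))) {-h..h}"
    using has_integral_combine[OF _ _ b a'] assms by simp
  have d: "((\<lambda>x. \<bar>x - t0\<bar> powr (-q)) has_integral (2 * (h powr (1-q) / (1-q)))) {t0-h..t0+h}"
    using has_integral_shift_real_ivl[OF c, of "-t0"] by (simp add: add.commute)
  have "(\<integral>\<^sup>+t. ennreal (\<bar>t - t0\<bar> powr (-q)) * indicator {t0-h..t0+h} t \<partial>lborel)
     = ennreal (2 * (h powr (1-q) / (1-q)))"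
    by (rule nn_integral_has_integral_lebesgue'[OF _ d]) auto
  thus ?thesis by (simp add: nn_integral_completion)
qed

lemma V_bound:
  fixes h q t0 :: real and E :: "real set"
  assumes "h > 0" "0 < q" "q < 1" and E: "E \<in> sets lebesgue" and m: "emeasure lebesgue E \<le> ennreal h"
  shows "(\<integral>\<^sup>+t\<in>E. ennreal (\<bar>t - t0\<bar> powr (-q)) \<partial>lebesgue)
     \<le> ennreal ((2/(1-q) + 1) * h powr (1-q))"
proof -
  have "(\<integral>\<^sup>+t\<in>E. ennreal (\<bar>t - t0\<bar> powr (-q)) \<partial>lebesgue)
    \<le> (\<integral>\<^sup>+t. ennreal (\<bar>t - t0\<bar> powr (-q)) * indicator {t0-h..t0+h} t
           + ennreal (h powr (-q)) * indicator E t \<partial>lebesgue)"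
  proof (rule nn_integral_mono)
    fix t
    show "ennreal (\<bar>t - t0\<bar> powr (-q)) * indicator E t
      \<le> ennreal (\<bar>t - t0\<bar> powr (-q)) * indicator {t0-h..t0+h} t
           + ennreal (h powr (-q)) * indicator E t"
    proof (cases "t \<in> E")
      case True
      show ?thesis
      proof (cases "\<bar>t - t0\<bar> \<le> h")
        case True
        hence "t \<in> {t0-h..t0+h}" by auto
        thus ?thesis using \<open>t \<in> E\<close> by simp
      next
        case False
        hence "\<bar>t - t0\<bar> powr (-q) \<le> h powr (-q)" using assms by (intro powr_mono2') auto
        thus ?thesis using \<open>t \<in> E\<close> by (simp add: add_increasing)
      qed
    qed simp
  qed
  also have "\<dots> = (\<integral>\<^sup>+t. ennreal (\<bar>t - t0\<bar> powr (-q)) * indicator {t0-h..t0+h} t \<partial>lebesgue)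
     + (\<integral>\<^sup>+t. ennreal (h powr (-q)) * indicator E t \<partial>lebesgue)"
    proof (rule nn_integral_add)
    show "(\<lambda>t. ennreal (\<bar>t - t0\<bar> powr (-q)) * indicator {t0-h..t0+h} t) \<in> borel_measurable lebesgue"
      by (rule bm_leb) measurable
    show "(\<lambda>t. ennreal (h powr (-q)) * indicator E t) \<in> borel_measurable lebesgue"
      using E by (rule bm_ind_leb)
  qed
  also have "\<dots> = ennreal (2 * (h powr (1-q) / (1-q))) + ennreal (h powr (-q)) * emeasure lebesgue E"
    using near_integral[OF assms(1-3)] E by (simp add: nn_integral_cmult_indicator)
  also have "\<dots> \<le> ennreal (2 * (h powr (1-q) / (1-q))) + ennreal (h powr (-q)) * ennreal h"
    by (intro add_left_mono mult_left_mono m) auto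
  also have "\<dots> = ennreal ((2/(1-q) + 1) * h powr (1-q))"
  proof -
    have "h powr (-q) * h = h powr (1-q)" using assms by (simp add: powr_diff powr_minus field_simps)
    thus ?thesis using assms by (simp add: ennreal_mult'[symmetric] ennreal_plus[symmetric] field_simps del: ennreal_plus)
  qed
  finally show ?thesis .
qed

lemma generic:
  fixes g w :: "real \<Rightarrow> real" and E :: "real set" and a B L r \<eta> :: real
  assumes r: "r > 1" "\<eta> > 0" "r*\<eta> < r - 1"
  and E: "E \<in> sets lebesgue" and EL: "emeasure lebesgue E \<le> ennreal L" "L > 0"
  and g: "g \<in> borel_measurable borel" "\<forall>t. 0 \<le> g t"
  and w: "w \<in> borel_measurable borel" "\<forall>t. 0 \<le> w t" "AE t in lebesgue. w t > 0"
  and a: "a > 0" "\<forall>t\<in>E. a \<le> g t"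
  and B: "B > 0" "\<forall>h>0. emeasure lebesgue E \<le> ennreal h \<longrightarrow>
      (\<integral>\<^sup>+t\<in>E. ennreal (w t powr (-1/(r-1))) \<partial>lebesgue) \<le> ennreal (B * h powr (1 - r*\<eta>/(r-1)))"
  shows "ennpowr (\<integral>\<^sup>+t\<in>E. ennreal (g t) \<partial>lebesgue) (1 + r*\<eta>) * ennreal (a powr (r - (1 + r*\<eta>)))
     \<le> ennreal (2 * (2*B) powr (r-1)) * (\<integral>\<^sup>+t\<in>E. ennreal (g t powr r * w t) \<partial>lebesgue)"
proof -
  define q where "q = r*\<eta>/(r-1)"
  have q: "0 < q" "q < 1" using r by (auto simp: q_def field_simps)
  define \<rho> where "\<rho> = (\<integral>\<^sup>+t\<in>E. ennreal (g t) \<partial>lebesgue)"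
  define I where "I = (\<integral>\<^sup>+t\<in>E. ennreal (g t powr r * w t) \<partial>lebesgue)"
  define VE where "VE = (\<integral>\<^sup>+t\<in>E. ennreal (w t powr (-1/(r-1))) \<partial>lebesgue)"
  define C0 where "C0 = 2 * (2*B) powr (r-1)"
  have C0: "C0 > 0" using B by (simp add: C0_def)

  have mI0: "(\<lambda>t. ennreal (g t powr r * w t)) \<in> borel_measurable borel" using g(1) w(1) by measurable
  have mI: "(\<lambda>t. ennreal (g t powr r * w t) * indicator E t) \<in> borel_measurable lebesgue"
    by (rule borel_measurable_times_ennreal[OF bm_leb[OF mI0] borel_measurable_indicator[OF E]])
  have mV0: "(\<lambda>t. ennreal (w t powr (-1/(r-1)))) \<in> borel_measurable borel" using w(1) by measurable
  have mV: "(\<lambda>t. ennreal (w t powr (-1/(r-1))) * indicator E t) \<in> borel_measurable lebesgue"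
    by (rule borel_measurable_times_ennreal[OF bm_leb[OF mV0] borel_measurable_indicator[OF E]])
  have step1: "\<rho> \<le> ennreal (1/K) * I + ennreal (K powr (1/(r-1))) * VE" if K: "K > 0" for K
  proof -
    have "\<rho> \<le> (\<integral>\<^sup>+t. ennreal (1/K) * (ennreal (g t powr r * w t) * indicator E t)
        + ennreal (K powr (1/(r-1))) * (ennreal (w t powr (-1/(r-1))) * indicator E t) \<partial>lebesgue)"
      unfolding \<rho>_def
    proof (rule nn_integral_mono_AE)
      show "AE t in lebesgue. ennreal (g t) * indicator E t \<le> ennreal (1/K) * (ennreal (g t powr r * w t) * indicator E t)
        + ennreal (K powr (1/(r-1))) * (ennreal (w t powr (-1/(r-1))) * indicator E t)"
        using w(3)
      proof eventually_elim
        case (elim t)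
        show ?case
        proof (cases "t \<in> E")
          case True
          have gt: "g t > 0" using a True by force
          have "g t \<le> g t powr r * w t / K + K powr (1/(r-1)) * w t powr (-1/(r-1))"
            by (rule pointwise_split[OF gt elim K r(1)])
          hence "ennreal (g t) \<le> ennreal (g t powr r * w t / K + K powr (1/(r-1)) * w t powr (-1/(r-1)))"
            by (rule ennreal_leI)
          also have "\<dots> = ennreal (1/K) * ennreal (g t powr r * w t) + ennreal (K powr (1/(r-1))) * ennreal (w t powr (-1/(r-1)))"
            using K w(2) by (simp add: ennreal_mult'[symmetric] ennreal_plus[symmetric] del: ennreal_plus)
          finally show ?thesis using True by simp
        qed simp
      qed
    qed
    also have "\<dots> = (\<integral>\<^sup>+t. ennreal (1/K) * (ennreal (g t powr r * w t) * indicator E t) \<partial>lebesgue)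
        + (\<integral>\<^sup>+t. ennreal (K powr (1/(r-1))) * (ennreal (w t powr (-1/(r-1))) * indicator E t) \<partial>lebesgue)"
      by (rule nn_integral_add[OF borel_measurable_times_ennreal[OF borel_measurable_const mI] borel_measurable_times_ennreal[OF borel_measurable_const mV]])
    also have "\<dots> = ennreal (1/K) * I + ennreal (K powr (1/(r-1))) * VE"
      unfolding I_def VE_def by (simp only: nn_integral_cmult[OF mI] nn_integral_cmult[OF mV])
    finally show ?thesis .
  qed
  have step2: "ennreal a * emeasure lebesgue E \<le> \<rho>"
  proof -
    have "ennreal a * emeasure lebesgue E = (\<integral>\<^sup>+t. ennreal a * indicator E t \<partial>lebesgue)"
      using E by (simp add: nn_integral_cmult_indicator)
    also have "\<dots> \<le> \<rho>" unfolding \<rho>_def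
    proof (rule nn_integral_mono)
      fix t show "ennreal a * indicator E t \<le> ennreal (g t) * indicator E t"
        using a by (cases "t \<in> E") (simp_all add: ennreal_leI)
    qed
    finally show ?thesis .
  qed
  have "VE \<le> ennreal (B * L powr (1 - r*\<eta>/(r-1)))" unfolding VE_def by (rule B(2)[rule_format, OF EL(2) EL(1)])
  hence VEfin: "VE < \<infinity>" by (rule le_less_trans) simp
  have "ennpowr \<rho> (1 + r*\<eta>) * ennreal (a powr (r - (1 + r*\<eta>))) \<le> ennreal C0 * I"
  proof (cases "\<rho> = \<infinity>")
    case True
    have "\<infinity> \<le> I + VE" using step1[of 1] True by simp
    hence "I = \<infinity>" using VEfin by (auto simp: top_unique)
    thus ?thesis using C0 by (simp add: ennreal_mult_top)
  next
    case False
    then obtain R where R: "\<rho> = ennreal R" "R \<ge> 0" by (cases \<rho>) auto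
    show ?thesis
    proof (cases "R = 0")
      case True
      thus ?thesis using R r by (simp add: ennpowr_def)
    next
      case False
      hence Rp: "R > 0" using R by simp
      define h where "h = R / a"
      have hp: "h > 0" using Rp a by (simp add: h_def)
      have "emeasure lebesgue E \<le> ennreal h"
      proof -
        obtain m where m: "emeasure lebesgue E = ennreal m" "m \<ge> 0"
          using EL by (cases "emeasure lebesgue E") (auto simp: top_unique)
        have "ennreal (a * m) \<le> ennreal R" using step2 R m a by (simp add: ennreal_mult)
        hence "a * m \<le> R" using Rp by (simp add: ennreal_le_iff2)
        hence "m \<le> h" using a by (simp add: h_def field_simps)
        thus ?thesis using m by simp
      qed
      hence VEb: "VE \<le> ennreal (B * h powr (1-q))" unfolding VE_def q_def by (rule B(2)[rule_format, OF hp])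
      define K where "K = R powr (r*\<eta>) * a powr (r - (1 + r*\<eta>)) / (2*B) powr (r-1)"
      have Kp: "K > 0" using Rp a B by (simp add: K_def)
      have K': "K powr (1/(r-1)) = R powr q * a powr (1-q) / (2*B)"
      proof -
        have "K powr (1/(r-1)) = (R powr (r*\<eta>)) powr (1/(r-1)) * (a powr (r - (1 + r*\<eta>))) powr (1/(r-1))
             / ((2*B) powr (r-1)) powr (1/(r-1))"
          unfolding K_def using Rp a B by (simp add: powr_divide powr_mult)
        also have "\<dots> = R powr q * a powr (1-q) / (2*B)"
          using r B by (simp add: powr_powr q_def field_simps)
        finally show ?thesis .
      qed
      have K'B: "K powr (1/(r-1)) * (B * h powr (1-q)) = R/2"
      proof -
        have "K powr (1/(r-1)) * (B * h powr (1-q)) = (R powr q * R powr (1-q)) * (a powr (1-q) / a powr (1-q)) / 2"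
          unfolding K' h_def using B Rp a by (simp add: powr_divide field_simps)
        also have "\<dots> = R / 2" using Rp a by (simp add: powr_add[symmetric])
        finally show ?thesis .
      qed
      have "ennreal R \<le> ennreal (1/K) * I + ennreal (K powr (1/(r-1))) * VE"
        using step1[OF Kp] R by simp
      also have "\<dots> \<le> ennreal (1/K) * I + ennreal (K powr (1/(r-1))) * ennreal (B * h powr (1-q))"
        by (intro add_left_mono mult_left_mono VEb) auto
      also have "\<dots> = ennreal (1/K) * I + ennreal (R/2)"
      proof -
        have "ennreal (K powr (1/(r-1))) * ennreal (B * h powr (1-q)) = ennreal (K powr (1/(r-1)) * (B * h powr (1-q)))"
          by (rule ennreal_mult'[symmetric]) simp
        thus ?thesis unfolding K'B by simp
      qed
      finally have main: "ennreal R \<le> ennreal (1/K) * I + ennreal (R/2)" .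
      show ?thesis
      proof (cases "I = \<infinity>")
        case True
        thus ?thesis using C0 by (simp add: ennreal_mult_top)
      next
        case False
        then obtain Ir where Ir: "I = ennreal Ir" "Ir \<ge> 0" by (cases I) auto
        have "ennreal R \<le> ennreal (Ir / K + R/2)"
          using main Ir Kp Rp by (simp add: ennreal_mult'[symmetric] ennreal_plus[symmetric] del: ennreal_plus)
        moreover have "0 \<le> Ir / K + R/2" using Rp Kp Ir by simp
        ultimately have "R \<le> Ir / K + R/2" using ennreal_le_iff by blast
        hence IrK: "K * R / 2 \<le> Ir" using Kp by (simp add: field_simps)
        have "R powr (1 + r*\<eta>) * a powr (r - (1 + r*\<eta>)) = C0 * (K * R / 2)"
          unfolding C0_def K_def using Rp a B by (simp add: powr_add field_simps)
        also have "\<dots> \<le> C0 * Ir" using IrK C0 by simp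
        finally have fin: "R powr (1 + r*\<eta>) * a powr (r - (1 + r*\<eta>)) \<le> C0 * Ir" .
        have "ennpowr \<rho> (1 + r*\<eta>) * ennreal (a powr (r - (1 + r*\<eta>))) = ennreal (R powr (1 + r*\<eta>) * a powr (r - (1 + r*\<eta>)))"
          using R by (simp add: ennpowr_def ennreal_mult')
        also have "\<dots> \<le> ennreal (C0 * Ir)" using fin by (rule ennreal_leI)
        also have "\<dots> = ennreal C0 * I" using Ir C0 by (simp add: ennreal_mult')
        finally show ?thesis .
      qed
    qed
  qed
  thus ?thesis unfolding \<rho>_def I_def C0_def .
qed

lemma V2_bound:
  fixes h q t1 t2 B0 :: real and E :: "real set"
  assumes "h > 0" "0 < q" "q < 1" and E: "E \<in> sets lebesgue" and m: "emeasure lebesgue E \<le> ennreal h"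
    and D: "\<bar>t2 - t1\<bar> > 0" and B0: "B0 = 2/(1-q) + 1"
  shows "(\<integral>\<^sup>+t\<in>E. ennreal ((\<bar>t - t1\<bar> * \<bar>t - t2\<bar>) powr (-q)) \<partial>lebesgue)
     \<le> ennreal ((2 * 2 powr q * B0) * \<bar>t2 - t1\<bar> powr (-q) * h powr (1-q))"
proof -
  define D where "D = \<bar>t2 - t1\<bar>"
  define c where "c = (D/2) powr (-q)"
  have cp: "c > 0" using D by (simp add: c_def D_def)
  have pw: "(\<bar>t - t1\<bar> * \<bar>t - t2\<bar>) powr (-q) \<le> c * (\<bar>t - t1\<bar> powr (-q) + \<bar>t - t2\<bar> powr (-q))" for t
  proof (cases "t = t1 \<or> t = t2")
    case True
    thus ?thesis using cp by auto
  next
    case False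
    hence p1: "\<bar>t - t1\<bar> > 0" and p2: "\<bar>t - t2\<bar> > 0" by auto
    have "D \<le> \<bar>t - t1\<bar> + \<bar>t - t2\<bar>" unfolding D_def by linarith
    hence "D/2 \<le> \<bar>t - t1\<bar> \<or> D/2 \<le> \<bar>t - t2\<bar>" by linarith
    thus ?thesis
    proof
      assume h1: "D/2 \<le> \<bar>t - t1\<bar>"
      have "(D/2) * \<bar>t - t2\<bar> \<le> \<bar>t - t1\<bar> * \<bar>t - t2\<bar>" using h1 p2 by (intro mult_right_mono) auto
      hence "(\<bar>t - t1\<bar> * \<bar>t - t2\<bar>) powr (-q) \<le> ((D/2) * \<bar>t - t2\<bar>) powr (-q)"
        using assms p2 D unfolding D_def by (intro powr_mono2') auto
      also have "\<dots> = c * \<bar>t - t2\<bar> powr (-q)" unfolding c_def D_def by (rule powr_mult; simp)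
      also have "\<dots> \<le> c * (\<bar>t - t1\<bar> powr (-q) + \<bar>t - t2\<bar> powr (-q))" using cp by (intro mult_left_mono) auto
      finally show ?thesis .
    next
      assume h2: "D/2 \<le> \<bar>t - t2\<bar>"
      have "(D/2) * \<bar>t - t1\<bar> \<le> \<bar>t - t1\<bar> * \<bar>t - t2\<bar>" using h2 p1 by (subst mult.commute, intro mult_right_mono) auto
      hence "(\<bar>t - t1\<bar> * \<bar>t - t2\<bar>) powr (-q) \<le> ((D/2) * \<bar>t - t1\<bar>) powr (-q)"
        using assms p1 D unfolding D_def by (intro powr_mono2') auto
      also have "\<dots> = c * \<bar>t - t1\<bar> powr (-q)" unfolding c_def D_def by (rule powr_mult; simp)
      also have "\<dots> \<le> c * (\<bar>t - t1\<bar> powr (-q) + \<bar>t - t2\<bar> powr (-q))" using cp by (intro mult_left_mono) auto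
      finally show ?thesis .
    qed
  qed
  have m1: "(\<lambda>t. ennreal (\<bar>t - t1\<bar> powr (-q)) * indicator E t) \<in> borel_measurable lebesgue"
    by (rule borel_measurable_times_ennreal[OF bm_leb borel_measurable_indicator[OF E]]) measurable
  have m2: "(\<lambda>t. ennreal (\<bar>t - t2\<bar> powr (-q)) * indicator E t) \<in> borel_measurable lebesgue"
    by (rule borel_measurable_times_ennreal[OF bm_leb borel_measurable_indicator[OF E]]) measurable
  have "(\<integral>\<^sup>+t\<in>E. ennreal ((\<bar>t - t1\<bar> * \<bar>t - t2\<bar>) powr (-q)) \<partial>lebesgue)
     \<le> (\<integral>\<^sup>+t. ennreal c * (ennreal (\<bar>t - t1\<bar> powr (-q)) * indicator E t)
           + ennreal c * (ennreal (\<bar>t - t2\<bar> powr (-q)) * indicator E t) \<partial>lebesgue)"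
  proof (rule nn_integral_mono)
    fix t
    have "ennreal ((\<bar>t - t1\<bar> * \<bar>t - t2\<bar>) powr (-q)) \<le> ennreal (c * (\<bar>t - t1\<bar> powr (-q) + \<bar>t - t2\<bar> powr (-q)))"
      by (rule ennreal_leI[OF pw])
    also have "\<dots> = ennreal c * ennreal (\<bar>t - t1\<bar> powr (-q)) + ennreal c * ennreal (\<bar>t - t2\<bar> powr (-q))"
      using cp by (simp add: ennreal_mult'[symmetric] ennreal_plus[symmetric] distrib_left del: ennreal_plus)
    finally show "ennreal ((\<bar>t - t1\<bar> * \<bar>t - t2\<bar>) powr (-q)) * indicator E t
      \<le> ennreal c * (ennreal (\<bar>t - t1\<bar> powr (-q)) * indicator E t)
           + ennreal c * (ennreal (\<bar>t - t2\<bar> powr (-q)) * indicator E t)"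
      by (cases "t \<in> E") simp_all
  qed
  also have "\<dots> = ennreal c * (\<integral>\<^sup>+t\<in>E. ennreal (\<bar>t - t1\<bar> powr (-q)) \<partial>lebesgue)
      + ennreal c * (\<integral>\<^sup>+t\<in>E. ennreal (\<bar>t - t2\<bar> powr (-q)) \<partial>lebesgue)"
    by (simp only: nn_integral_add[OF borel_measurable_times_ennreal[OF borel_measurable_const m1] borel_measurable_times_ennreal[OF borel_measurable_const m2]]
        nn_integral_cmult[OF m1] nn_integral_cmult[OF m2])
  also have "\<dots> \<le> ennreal c * ennreal (B0 * h powr (1-q)) + ennreal c * ennreal (B0 * h powr (1-q))"
    using V_bound[OF assms(1-5)] unfolding B0 by (intro add_mono mult_left_mono) auto
  also have "\<dots> = ennreal (2 * c * B0 * h powr (1-q))"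
    using cp B0 assms(2,3) by (simp add: ennreal_mult'[symmetric] ennreal_plus[symmetric] del: ennreal_plus)
  also have "2 * c * B0 * h powr (1-q) = (2 * 2 powr q * B0) * \<bar>t2 - t1\<bar> powr (-q) * h powr (1-q)"
    using D unfolding c_def D_def by (simp add: powr_divide powr_minus field_simps)
  finally show ?thesis .
qed

theorem lemma2p3:
  fixes \<eta> r :: real
  assumes "\<eta> > 0" and "r > 1" and "\<eta> < 1 - 1 / r"
  shows "\<exists>C>0. \<forall>(c::real) (d::real) (\<omega>::real \<Rightarrow> real) (E::real set).
    c < d \<and> (\<forall>t\<in>{c..<d}. 0 \<le> \<omega> t) \<and> mono_on {c..<d} \<omega> \<and>
    E \<in> sets lebesgue \<and> E \<subseteq> {c..<d} \<longrightarrow>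
      (let \<rho> = (\<integral>\<^sup>+ t\<in>E. ennreal (\<omega> t) \<partial>lebesgue) in
        (\<forall>t0::real.
          ennpowr \<rho> (1 + r * \<eta>) * ennreal (\<omega> c powr (r - (1 + r * \<eta>)))
            \<le> ennreal C * (\<integral>\<^sup>+ t\<in>E. ennreal (\<omega> t powr r * \<bar>t - t0\<bar> powr (r * \<eta>)) \<partial>lebesgue)) \<and>
        (\<forall>t1 t2::real.
          ennpowr \<rho> (1 + r * \<eta>) * ennreal (\<bar>t2 - t1\<bar> powr (r * \<eta>))
              * ennreal (\<omega> c powr (r - (1 + r * \<eta>)))
            \<le> ennreal C * (\<integral>\<^sup>+ t\<in>E. ennreal (\<omega> t powr r * (\<bar>t - t1\<bar> * \<bar>t - t2\<bar>) powr (r * \<eta>)) \<partial>lebesgue)))"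
proof -
  have r1: "r > 1" using assms by simp
  have reta: "r * \<eta> < r - 1" using assms by (simp add: field_simps)
  define q where "q = r*\<eta>/(r-1)"
  have q: "0 < q" "q < 1" using r1 reta assms(1) by (auto simp: q_def field_simps)
  define B0 where "B0 = 2/(1-q) + 1"
  have "2/(1-q) > 0" using q by simp
  hence B0: "B0 > 0" unfolding B0_def by linarith
  define B' where "B' = 2 * 2 powr q * B0"
  have B': "B' > 0" "B0 \<le> B'"
  proof -
    show "B' > 0" using B0 by (simp add: B'_def)
    have "1 \<le> (2::real) powr q" using q by (intro ge_one_powr_ge_zero) auto
    hence "1 \<le> 2 * 2 powr q" by linarith
    thus "B0 \<le> B'" using B0 unfolding B'_def by (metis mult_le_cancel_right1 less_le_not_le)
  qed
  define C where "C = 2 * (2*B') powr (r-1)"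
  have Cp: "C > 0" using B' by (simp add: C_def)
  show ?thesis
  proof (intro exI[of _ C] conjI Cp allI impI)
    fix c d :: real and \<omega> :: "real \<Rightarrow> real" and E :: "real set"
    assume H: "c < d \<and> (\<forall>t\<in>{c..<d}. 0 \<le> \<omega> t) \<and> mono_on {c..<d} \<omega> \<and> E \<in> sets lebesgue \<and> E \<subseteq> {c..<d}"
    hence cd: "c < d" and nn: "\<forall>t\<in>{c..<d}. 0 \<le> \<omega> t" and mono: "mono_on {c..<d} \<omega>"
      and E: "E \<in> sets lebesgue" and Esub: "E \<subseteq> {c..<d}" by auto
    define g where "g t = indicator {c..<d} t * \<omega> t" for t
    have gm: "g \<in> borel_measurable borel"
      using borel_measurable_mono_on_fnc[OF mono] unfolding g_def
      by (subst (asm) borel_measurable_restrict_space_iff) auto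
    have g0: "\<forall>t. 0 \<le> g t" using nn by (auto simp: g_def indicator_def)
    have gE: "\<And>t. t \<in> E \<Longrightarrow> g t = \<omega> t" using Esub by (auto simp: g_def)
    have cong: "(\<integral>\<^sup>+ t\<in>E. ennreal (F (\<omega> t) t) \<partial>lebesgue) = (\<integral>\<^sup>+ t\<in>E. ennreal (F (g t) t) \<partial>lebesgue)" for F
      by (rule nn_integral_cong) (auto simp: indicator_def gE)
    have EL: "emeasure lebesgue E \<le> ennreal (d - c)"
    proof -
      have "emeasure lebesgue E \<le> emeasure lebesgue {c..<d}" using E Esub by (intro emeasure_mono) auto
      also have "\<dots> = ennreal (d - c)" using cd by simp
      finally show ?thesis .
    qed
    define \<rho> where "\<rho> = (\<integral>\<^sup>+ t\<in>E. ennreal (\<omega> t) \<partial>lebesgue)"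
    have \<rho>g: "\<rho> = (\<integral>\<^sup>+ t\<in>E. ennreal (g t) \<partial>lebesgue)" unfolding \<rho>_def using cong[of "\<lambda>x t. x"] by simp
    define a where "a = \<omega> c"
    have part1: "ennpowr \<rho> (1 + r * \<eta>) * ennreal (a powr (r - (1 + r * \<eta>)))
            \<le> ennreal C * (\<integral>\<^sup>+ t\<in>E. ennreal (\<omega> t powr r * \<bar>t - t0\<bar> powr (r * \<eta>)) \<partial>lebesgue)" for t0
    proof (cases "a = 0")
      case True thus ?thesis by simp
    next
      case False
      hence ap: "a > 0" using nn cd by (auto simp: a_def less_le)
      have aE: "\<forall>t\<in>E. a \<le> g t" using Esub mono gE unfolding a_def
        by (force simp: mono_on_def)
      have wm: "(\<lambda>t. \<bar>t - t0\<bar> powr (r * \<eta>)) \<in> borel_measurable borel" by measurable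
      have wAE: "AE t in lebesgue. \<bar>t - t0\<bar> powr (r * \<eta>) > 0"
        using AE_completion[OF AE_lborel_singleton[of t0]] by eventually_elim simp
      have Vb: "\<forall>h>0. emeasure lebesgue E \<le> ennreal h \<longrightarrow>
        (\<integral>\<^sup>+t\<in>E. ennreal ((\<bar>t - t0\<bar> powr (r * \<eta>)) powr (-1/(r-1))) \<partial>lebesgue) \<le> ennreal (B' * h powr (1 - r*\<eta>/(r-1)))"
      proof (intro allI impI)
        fix h :: real assume hp: "h > 0" and mh: "emeasure lebesgue E \<le> ennreal h"
        have "(\<integral>\<^sup>+t\<in>E. ennreal ((\<bar>t - t0\<bar> powr (r * \<eta>)) powr (-1/(r-1))) \<partial>lebesgue)
           = (\<integral>\<^sup>+t\<in>E. ennreal (\<bar>t - t0\<bar> powr (-q)) \<partial>lebesgue)"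
          by (simp add: powr_powr q_def)
        also have "\<dots> \<le> ennreal (B0 * h powr (1-q))"
          using V_bound[OF hp q E mh, of t0] unfolding B0_def .
        also have "\<dots> \<le> ennreal (B' * h powr (1-q))"
          using B' hp by (intro ennreal_leI mult_right_mono) auto
        finally show "(\<integral>\<^sup>+t\<in>E. ennreal ((\<bar>t - t0\<bar> powr (r * \<eta>)) powr (-1/(r-1))) \<partial>lebesgue) \<le> ennreal (B' * h powr (1 - r*\<eta>/(r-1)))"
          unfolding q_def .
      qed
      have "ennpowr (\<integral>\<^sup>+t\<in>E. ennreal (g t) \<partial>lebesgue) (1 + r*\<eta>) * ennreal (a powr (r - (1 + r*\<eta>)))
        \<le> ennreal (2 * (2*B') powr (r-1)) * (\<integral>\<^sup>+t\<in>E. ennreal (g t powr r * \<bar>t - t0\<bar> powr (r * \<eta>)) \<partial>lebesgue)"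
        by (rule generic[OF r1 assms(1) reta E EL _ gm g0 wm _ wAE ap aE B'(1) Vb]) (use cd in auto)
      thus ?thesis unfolding \<rho>g C_def using cong[of "\<lambda>x t. x powr r * \<bar>t - t0\<bar> powr (r * \<eta>)"] by simp
    qed
    have part2: "ennpowr \<rho> (1 + r * \<eta>) * ennreal (\<bar>t2 - t1\<bar> powr (r * \<eta>)) * ennreal (a powr (r - (1 + r * \<eta>)))
            \<le> ennreal C * (\<integral>\<^sup>+ t\<in>E. ennreal (\<omega> t powr r * (\<bar>t - t1\<bar> * \<bar>t - t2\<bar>) powr (r * \<eta>)) \<partial>lebesgue)" for t1 t2
    proof (cases "a = 0 \<or> t1 = t2")
      case True thus ?thesis by auto
    next
      case False
      hence ap: "a > 0" using nn cd by (auto simp: a_def less_le)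
      have Dp: "\<bar>t2 - t1\<bar> > 0" using False by auto
      define D where "D = \<bar>t2 - t1\<bar>"
      have aE: "\<forall>t\<in>E. a \<le> g t" using Esub mono gE unfolding a_def
        by (force simp: mono_on_def)
      have wm: "(\<lambda>t. (\<bar>t - t1\<bar> * \<bar>t - t2\<bar>) powr (r * \<eta>)) \<in> borel_measurable borel" by measurable
      have wAE: "AE t in lebesgue. (\<bar>t - t1\<bar> * \<bar>t - t2\<bar>) powr (r * \<eta>) > 0"
        using AE_completion[OF AE_lborel_singleton[of t1]] AE_completion[OF AE_lborel_singleton[of t2]]
        by eventually_elim simp
      have Vb: "\<forall>h>0. emeasure lebesgue E \<le> ennreal h \<longrightarrow>
        (\<integral>\<^sup>+t\<in>E. ennreal (((\<bar>t - t1\<bar> * \<bar>t - t2\<bar>) powr (r * \<eta>)) powr (-1/(r-1))) \<partial>lebesgue)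
          \<le> ennreal ((B' * D powr (-q)) * h powr (1 - r*\<eta>/(r-1)))"
      proof (intro allI impI)
        fix h :: real assume hp: "h > 0" and mh: "emeasure lebesgue E \<le> ennreal h"
        have "(\<integral>\<^sup>+t\<in>E. ennreal (((\<bar>t - t1\<bar> * \<bar>t - t2\<bar>) powr (r * \<eta>)) powr (-1/(r-1))) \<partial>lebesgue)
           = (\<integral>\<^sup>+t\<in>E. ennreal ((\<bar>t - t1\<bar> * \<bar>t - t2\<bar>) powr (-q)) \<partial>lebesgue)"
          by (simp add: powr_powr q_def)
        also have "\<dots> \<le> ennreal ((2 * 2 powr q * B0) * \<bar>t2 - t1\<bar> powr (-q) * h powr (1-q))"
          by (rule V2_bound[OF hp q E mh Dp B0_def])
        finally show "(\<integral>\<^sup>+t\<in>E. ennreal (((\<bar>t - t1\<bar> * \<bar>t - t2\<bar>) powr (r * \<eta>)) powr (-1/(r-1))) \<partial>lebesgue)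
          \<le> ennreal ((B' * D powr (-q)) * h powr (1 - r*\<eta>/(r-1)))"
          unfolding q_def B'_def D_def .
      qed
      have B2: "B' * D powr (-q) > 0" using B' Dp by (simp add: D_def)
      have G: "ennpowr \<rho> (1 + r*\<eta>) * ennreal (a powr (r - (1 + r*\<eta>)))
        \<le> ennreal (2 * (2*(B' * D powr (-q))) powr (r-1)) * (\<integral>\<^sup>+t\<in>E. ennreal (g t powr r * (\<bar>t - t1\<bar> * \<bar>t - t2\<bar>) powr (r * \<eta>)) \<partial>lebesgue)"
        unfolding \<rho>g
        by (rule generic[OF r1 assms(1) reta E EL _ gm g0 wm _ wAE ap aE B2 Vb]) (use cd in auto)
      have Ceq: "2 * (2*(B' * D powr (-q))) powr (r-1) * D powr (r*\<eta>) = C"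
      proof -
        have "(D powr (-q)) powr (r-1) * D powr (r*\<eta>) = 1"
          using Dp r1 unfolding D_def q_def by (simp add: powr_powr powr_add[symmetric])
        moreover have "(2*(B' * D powr (-q))) powr (r-1) = (2*B') powr (r-1) * (D powr (-q)) powr (r-1)"
          using B' Dp by (simp add: powr_mult)
        ultimately show ?thesis unfolding C_def by (metis mult.assoc mult.right_neutral)
      qed
      define I where "I = (\<integral>\<^sup>+ t\<in>E. ennreal (\<omega> t powr r * (\<bar>t - t1\<bar> * \<bar>t - t2\<bar>) powr (r * \<eta>)) \<partial>lebesgue)"
      have Ig: "I = (\<integral>\<^sup>+t\<in>E. ennreal (g t powr r * (\<bar>t - t1\<bar> * \<bar>t - t2\<bar>) powr (r * \<eta>)) \<partial>lebesgue)"
        unfolding I_def using cong[of "\<lambda>x t. x powr r * (\<bar>t - t1\<bar> * \<bar>t - t2\<bar>) powr (r * \<eta>)"] by simp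
      have "ennpowr \<rho> (1 + r * \<eta>) * ennreal (\<bar>t2 - t1\<bar> powr (r * \<eta>)) * ennreal (a powr (r - (1 + r * \<eta>)))
          = (ennpowr \<rho> (1 + r * \<eta>) * ennreal (a powr (r - (1 + r * \<eta>)))) * ennreal (D powr (r * \<eta>))"
        unfolding D_def by (simp add: ac_simps)
      also have "\<dots> \<le> (ennreal (2 * (2*(B' * D powr (-q))) powr (r-1)) * I) * ennreal (D powr (r * \<eta>))"
        using G unfolding Ig by (rule mult_right_mono) simp
      also have "\<dots> = ennreal (2 * (2*(B' * D powr (-q))) powr (r-1) * D powr (r*\<eta>)) * I"
        by (simp add: ennreal_mult' ac_simps)
      also have "\<dots> = ennreal C * I" unfolding Ceq ..
      finally show ?thesis unfolding I_def .
    qed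
    show "let \<rho> = (\<integral>\<^sup>+ t\<in>E. ennreal (\<omega> t) \<partial>lebesgue) in
        (\<forall>t0::real.
          ennpowr \<rho> (1 + r * \<eta>) * ennreal (\<omega> c powr (r - (1 + r * \<eta>)))
            \<le> ennreal C * (\<integral>\<^sup>+ t\<in>E. ennreal (\<omega> t powr r * \<bar>t - t0\<bar> powr (r * \<eta>)) \<partial>lebesgue)) \<and>
        (\<forall>t1 t2::real.
          ennpowr \<rho> (1 + r * \<eta>) * ennreal (\<bar>t2 - t1\<bar> powr (r * \<eta>))
              * ennreal (\<omega> c powr (r - (1 + r * \<eta>)))
            \<le> ennreal C * (\<integral>\<^sup>+ t\<in>E. ennreal (\<omega> t powr r * (\<bar>t - t1\<bar> * \<bar>t - t2\<bar>) powr (r * \<eta>)) \<partial>lebesgue))"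
      unfolding Let_def \<rho>_def[symmetric] a_def[symmetric] using part1 part2 by blast
  qed
qed

end
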